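(* Let $\mathcal{S}\subseteq 2^{[n]}$ be a Sperner family and let $h:\mathcal{S}\to 2^{[n]}$ be a function with $h(S)\subseteq S$ for every $S\in\mathcal{S}$. Then $\mathcal{F}=\mathcal{F}(\mathcal{S},h)$ is s-extremal with $\mathrm{Sh}(\mathcal{F})=\mathcal{H}(\mathcal{S})$ if and only if $|\mathcal{F}(\mathcal{S},h)|=|\mathcal{H}(\mathcal{S})|$.
   Context: $[n]=\{1,\dots,n\}$. A Sperner family is a family of sets none of which is contained in another. $\mathcal{F}\subseteq 2^{[n]}$ shatters $S$ if $\{F\cap S:F\in\mathcal{F}\}=2^S$; $\mathrm{Sh}(\mathcal{F})$ is the family of shattered sets; $\mathcal{F}$ is s-extremal if $|\mathrm{Sh}(\mathcal{F})|=|\mathcal{F}|$. For $H\subseteq S\subseteq[n]$: $\mathcal{P}_S=\{S\cup B: B\subseteq[n]\setminus S\}$ and $\mathcal{Q}_{S,H}=\{H\cup B: B\subseteq[n]\setminus S\}$. $\mathrm{Up}(\mathcal{S})=\bigcup_{S\in\mathcal{S}}\mathcal{P}_S$, $\mathcal{H}(\mathcal{S})=2^{[n]}\setminus\mathrm{Up}(\mathcal{S})$, and $\mathcal{F}(\mathcal{S},h)=2^{[n]}\setminus\bigcup_{S\in\mathcal{S}}\mathcal{Q}_{S,h(S)}$. *)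

theory Defs
  imports Main
begin

definition sperner :: "'a set set \<Rightarrow> bool" where
  "sperner S \<longleftrightarrow> (\<forall>A\<in>S. \<forall>B\<in>S. A \<subseteq> B \<longrightarrow> A = B)"

definition shatters :: "'a set set \<Rightarrow> 'a set \<Rightarrow> bool" where
  "shatters F S \<longleftrightarrow> (\<lambda>F'. F' \<inter> S) ` F = Pow S"

definition Sh :: "nat \<Rightarrow> nat set set \<Rightarrow> nat set set" where
  "Sh n F = {S. S \<subseteq> {1..n} \<and> shatters F S}"

definition s_extremal :: "nat \<Rightarrow> nat set set \<Rightarrow> bool" where
  "s_extremal n F \<longleftrightarrow> card (Sh n F) = card F"

definition P_fam :: "nat \<Rightarrow> nat set \<Rightarrow> nat set set" where
  "P_fam n S = {S \<union> B | B. B \<subseteq> {1..n} - S}"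

definition Q_fam :: "nat \<Rightarrow> nat set \<Rightarrow> nat set \<Rightarrow> nat set set" where
  "Q_fam n S H = {H \<union> B | B. B \<subseteq> {1..n} - S}"

definition Up :: "nat \<Rightarrow> nat set set \<Rightarrow> nat set set" where
  "Up n \<S> = (\<Union>S\<in>\<S>. P_fam n S)"

definition H_fam :: "nat \<Rightarrow> nat set set \<Rightarrow> nat set set" where
  "H_fam n \<S> = Pow {1..n} - Up n \<S>"

definition F_fam :: "nat \<Rightarrow> nat set set \<Rightarrow> (nat set \<Rightarrow> nat set) \<Rightarrow> nat set set" where
  "F_fam n \<S> h = Pow {1..n} - (\<Union>S\<in>\<S>. Q_fam n S (h S))"

end

theory Submission
  imports Defs
begin

lemma shatters_intro:
  assumes "Pow S \<subseteq> (\<lambda>A. A \<inter> S) ` F" shows "shatters F S"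
  unfolding shatters_def
proof (rule equalityI)
  show "(\<lambda>A. A \<inter> S) ` F \<subseteq> Pow S" by (rule image_subsetI) simp
qed (rule assms)

lemma shatters_D: "shatters F S \<Longrightarrow> Pow S \<subseteq> (\<lambda>A. A \<inter> S) ` F"
  unfolding shatters_def by (rule equalityD2)

lemma shatters_mono:
  assumes "F0 \<subseteq> F" "shatters F0 S" shows "shatters F S"
proof -
  have "(\<lambda>A. A \<inter> S) ` F0 \<subseteq> (\<lambda>A. A \<inter> S) ` F" using assms(1) by (rule image_mono)
  then show ?thesis using shatters_D[OF assms(2)] by (intro shatters_intro) (rule subset_trans)
qed

lemma pajor:
  assumes "finite X"
  shows "F \<subseteq> Pow X \<Longrightarrow> card F \<le> card {S. S \<subseteq> X \<and> shatters F S}"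
  using assms
proof (induction X arbitrary: F rule: finite_induct)
  case empty
  show ?case
  proof (cases "F = {}")
    case True then show ?thesis by simp
  next
    case False
    have "F \<subseteq> {{}}" using empty by simp
    with False have F: "F = {{}}" by blast
    have "(\<lambda>F'. F' \<inter> {}) ` F = Pow {}" unfolding F by simp
    then have "shatters F {}" unfolding shatters_def .
    then have "{S. S \<subseteq> {} \<and> shatters F S} = {{}}" by blast
    then show ?thesis using F by simp
  qed
next
  case (insert x X)
  define F0 where "F0 = {A\<in>F. x \<notin> A}"
  define G where "G = {A\<in>F. x \<in> A}"
  define F1 where "F1 = (\<lambda>A. A - {x}) ` G"
  define Sh0 where "Sh0 = {S. S \<subseteq> X \<and> shatters F0 S}"
  define Sh1 where "Sh1 = {S. S \<subseteq> X \<and> shatters F1 S}"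
  define ShF where "ShF = {S. S \<subseteq> insert x X \<and> shatters F S}"
  have finF: "finite F" using insert.prems insert.hyps(1) finite_subset by blast
  have F0X: "F0 \<subseteq> Pow X" using insert.prems unfolding F0_def by auto
  have F1X: "F1 \<subseteq> Pow X" using insert.prems unfolding F1_def G_def by auto
  have i0: "card F0 \<le> card Sh0" using insert.IH[OF F0X] unfolding Sh0_def .
  have i1: "card F1 \<le> card Sh1" using insert.IH[OF F1X] unfolding Sh1_def .
  have injG: "inj_on (\<lambda>A. A - {x}) G" unfolding G_def inj_on_def by blast
  have cF1: "card F1 = card G" unfolding F1_def using card_image[OF injG] .
  have "F = F0 \<union> G" "F0 \<inter> G = {}" unfolding F0_def G_def by auto
  then have cF: "card F = card F0 + card G" using finF
    by (simp add: card_Un_disjoint)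
  have finSh: "finite Sh0" "finite Sh1"
    by (rule finite_subset[of _ "Pow X"], auto simp: Sh0_def Sh1_def insert.hyps(1))+
  have finShF: "finite ShF"
    by (rule finite_subset[of _ "Pow (insert x X)"], auto simp: ShF_def insert.hyps(1))
  have a: "Sh0 \<union> Sh1 \<subseteq> ShF"
  proof
    fix S assume S: "S \<in> Sh0 \<union> Sh1"
    then have SX: "S \<subseteq> X" unfolding Sh0_def Sh1_def by auto
    have "x \<notin> S" using SX insert.hyps(2) by auto
    show "S \<in> ShF"
    proof (cases "S \<in> Sh0")
      case True
      then have "shatters F0 S" unfolding Sh0_def by blast
      moreover have "F0 \<subseteq> F" unfolding F0_def by blast
      ultimately have "shatters F S" using shatters_mono by blast
      then show ?thesis using SX unfolding ShF_def by auto
    next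
      case False
      then have sh: "shatters F1 S" using S unfolding Sh1_def by auto
      have "(\<lambda>A. A \<inter> S) ` F1 \<subseteq> (\<lambda>A. A \<inter> S) ` F"
      proof
        fix C assume "C \<in> (\<lambda>A. A \<inter> S) ` F1"
        then obtain A where "A \<in> G" "C = (A - {x}) \<inter> S" unfolding F1_def by blast
        moreover have "(A - {x}) \<inter> S = A \<inter> S" using \<open>x \<notin> S\<close> by blast
        ultimately show "C \<in> (\<lambda>A. A \<inter> S) ` F" unfolding G_def by blast
      qed
      then have "shatters F S" using shatters_D[OF sh] by (intro shatters_intro) (rule subset_trans)
      then show ?thesis using SX unfolding ShF_def by auto
    qed
  qed
  have b: "insert x ` (Sh0 \<inter> Sh1) \<subseteq> ShF"
  proof
    fix T assume "T \<in> insert x ` (Sh0 \<inter> Sh1)"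
    then obtain S where S: "S \<in> Sh0" "S \<in> Sh1" and T: "T = insert x S" by auto
    have SX: "S \<subseteq> X" using S unfolding Sh0_def by auto
    have xS: "x \<notin> S" using SX insert.hyps(2) by auto
    have sh0: "shatters F0 S" and sh1: "shatters F1 S" using S unfolding Sh0_def Sh1_def by auto
    have "(\<lambda>A. A \<inter> T) ` F = Pow T"
    proof
      show "(\<lambda>A. A \<inter> T) ` F \<subseteq> Pow T" by auto
      show "Pow T \<subseteq> (\<lambda>A. A \<inter> T) ` F"
      proof
        fix U assume U: "U \<in> Pow T"
        show "U \<in> (\<lambda>A. A \<inter> T) ` F"
        proof (cases "x \<in> U")
          case True
          have "U - {x} \<in> Pow S" using U T by auto
          then have "U - {x} \<in> (\<lambda>A. A \<inter> S) ` F1" by (rule subsetD[OF shatters_D[OF sh1]])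
          then obtain B where B: "B \<in> F1" "B \<inter> S = U - {x}" by blast
          then obtain A where A: "A \<in> G" "B = A - {x}" unfolding F1_def by auto
          have "A \<inter> T = U" using A B T True xS unfolding G_def by auto
          then show ?thesis using A unfolding G_def by auto
        next
          case False
          have "U \<in> Pow S" using U T False by auto
          then have "U \<in> (\<lambda>A. A \<inter> S) ` F0" by (rule subsetD[OF shatters_D[OF sh0]])
          then obtain A where A: "A \<in> F0" "A \<inter> S = U" by blast
          have "A \<inter> T = U" using A T unfolding F0_def by auto
          then show ?thesis using A unfolding F0_def by auto
        qed
      qed
    qed
    then have "shatters F T" unfolding shatters_def .
    moreover have "T \<subseteq> insert x X" using SX T by blast
    ultimately show "T \<in> ShF" unfolding ShF_def by blast
  qed
  have disj: "(Sh0 \<union> Sh1) \<inter> insert x ` (Sh0 \<inter> Sh1) = {}"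
    using insert.hyps(2) unfolding Sh0_def Sh1_def by auto
  have injx: "inj_on (insert x) (Sh0 \<inter> Sh1)"
  proof (rule inj_onI)
    fix A B assume "A \<in> Sh0 \<inter> Sh1" "B \<in> Sh0 \<inter> Sh1" "insert x A = insert x B"
    moreover have "x \<notin> A" "x \<notin> B" using calculation insert.hyps(2) unfolding Sh0_def by auto
    ultimately show "A = B" by (metis Diff_insert_absorb)
  qed
  have "card Sh0 + card Sh1 = card (Sh0 \<union> Sh1) + card (Sh0 \<inter> Sh1)"
    using card_Un_Int[OF finSh] .
  also have "\<dots> = card (Sh0 \<union> Sh1) + card (insert x ` (Sh0 \<inter> Sh1))"
    using card_image[OF injx] by simp
  also have "\<dots> = card ((Sh0 \<union> Sh1) \<union> insert x ` (Sh0 \<inter> Sh1))"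
    using disj finSh by (simp add: card_Un_disjoint)
  also have "\<dots> \<le> card ShF" using a b finShF by (intro card_mono) auto
  finally show ?case using i0 i1 cF cF1 unfolding ShF_def by linarith
qed

theorem proposition7:
  fixes n :: nat and \<S> :: "nat set set" and h :: "nat set \<Rightarrow> nat set"
  assumes "\<S> \<subseteq> Pow {1..n}"
    and "sperner \<S>"
    and "\<forall>S\<in>\<S>. h S \<subseteq> S"
  shows "(s_extremal n (F_fam n \<S> h) \<and> Sh n (F_fam n \<S> h) = H_fam n \<S>)
     \<longleftrightarrow> card (F_fam n \<S> h) = card (H_fam n \<S>)"
proof
  assume a: "s_extremal n (F_fam n \<S> h) \<and> Sh n (F_fam n \<S> h) = H_fam n \<S>"
  then have "card (Sh n (F_fam n \<S> h)) = card (F_fam n \<S> h)" unfolding s_extremal_def by blast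
  moreover have "card (Sh n (F_fam n \<S> h)) = card (H_fam n \<S>)" using a by (rule_tac arg_cong) blast
  ultimately show "card (F_fam n \<S> h) = card (H_fam n \<S>)" by linarith
next
  assume eq: "card (F_fam n \<S> h) = card (H_fam n \<S>)"
  let ?F = "F_fam n \<S> h"
  have FP: "?F \<subseteq> Pow {1..n}" unfolding F_fam_def by auto
  have sub: "Sh n ?F \<subseteq> H_fam n \<S>"
  proof
    fix T assume T: "T \<in> Sh n ?F"
    then have TX: "T \<subseteq> {1..n}" and sh: "shatters ?F T" unfolding Sh_def by auto
    have "T \<notin> Up n \<S>"
    proof
      assume "T \<in> Up n \<S>"
      then obtain S where S1: "S \<in> \<S>" "T \<in> P_fam n S" unfolding Up_def by blast
      then obtain B where "T = S \<union> B" unfolding P_fam_def by blast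
      with S1 have S: "S \<in> \<S>" "T = S \<union> B" by auto
      have "h S \<in> Pow T" using S assms(3) by auto
      then have "h S \<in> (\<lambda>A. A \<inter> T) ` ?F" by (rule subsetD[OF shatters_D[OF sh]])
      then obtain A where A: "A \<in> ?F" "A \<inter> T = h S" by blast
      have hS: "h S \<subseteq> S" using S assms(3) by auto
      have "A \<inter> S = h S" using A(2) S hS by auto
      moreover have AX: "A \<subseteq> {1..n}" using A FP by auto
      ultimately have "A = h S \<union> (A - S)" by auto
      moreover have "A - S \<subseteq> {1..n} - S" using AX by blast
      ultimately have "A \<in> Q_fam n S (h S)" unfolding Q_fam_def by blast
      then show False using A(1) S(1) unfolding F_fam_def by blast
    qed
    then show "T \<in> H_fam n \<S>" unfolding H_fam_def using TX by blast
  qed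
  have finH: "finite (H_fam n \<S>)" unfolding H_fam_def by auto
  have "card ?F \<le> card {S. S \<subseteq> {1..n} \<and> shatters ?F S}" using pajor[OF _ FP] by simp
  then have le: "card ?F \<le> card (Sh n ?F)" unfolding Sh_def .
  have le2: "card (Sh n ?F) \<le> card (H_fam n \<S>)" using card_mono[OF finH sub] .
  have "Sh n ?F = H_fam n \<S>" using card_subset_eq[OF finH sub] le le2 eq by linarith
  moreover have "s_extremal n ?F" unfolding s_extremal_def using le le2 eq by linarith
  ultimately show "s_extremal n ?F \<and> Sh n ?F = H_fam n \<S>" by simp
qed

end
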